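(* For integers $m,n\ge0$, $$\sum_{i=2n-m+1}^{m}\binom{m}{i}\frac{(m+i)!}{(m+i-2n-1)!}(-2)^{-i}=0,$$ where $\binom{m}{i}=0$ for $i<0$. *)

theory Defs imports Complex_Main begin

definition int_binom :: "nat \<Rightarrow> int \<Rightarrow> nat" where
  "int_binom m i = (if i < 0 then 0 else m choose nat i)"

end

theory Submission imports Defs "HOL-Computational_Algebra.Polynomial" begin

definition evenp :: "real poly \<Rightarrow> bool" where
  "evenp p \<longleftrightarrow> (\<forall>k. odd k \<longrightarrow> coeff p k = 0)"

lemma evenp_mult: "evenp p \<Longrightarrow> evenp q \<Longrightarrow> evenp (p * q)"
  unfolding evenp_def
proof (intro allI impI)
  fix k :: nat assume p: "\<forall>k. odd k \<longrightarrow> coeff p k = 0" and q: "\<forall>k. odd k \<longrightarrow> coeff q k = 0"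
    and k: "odd k"
  have "coeff (p * q) k = (\<Sum>i\<le>k. coeff p i * coeff q (k - i))" by (rule coeff_mult)
  also have "\<dots> = 0"
  proof (rule sum.neutral, intro ballI)
    fix i assume "i \<in> {..k}"
    hence "i \<le> k" by simp
    show "coeff p i * coeff q (k - i) = 0"
    proof (cases "odd i")
      case True then show ?thesis using p by simp
    next
      case False
      hence "odd (k - i)" using k \<open>i \<le> k\<close> by simp
      then show ?thesis using q by simp
    qed
  qed
  finally show "coeff (p * q) k = 0" .
qed

lemma evenp_power: "evenp p \<Longrightarrow> evenp (p ^ m)"
proof (induction m)
  case 0 show ?case by (auto simp: evenp_def odd_pos)
next
  case (Suc m) thus ?case by (simp add: evenp_mult)
qed

lemma smult_aux: "smult (real c * x ^ j) ((A::real poly) ^ (m + j)) = A ^ m * (of_nat c * (smult x A) ^ j * 1 ^ (m - j))"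
proof -
  have "smult (real c * x ^ j) (A ^ (m + j)) = smult (real c) (A ^ m * smult (x^j) (A ^ j))"
    by (simp add: power_add mult_ac)
  also have "\<dots> = A ^ m * (of_nat c * (smult x A) ^ j * 1 ^ (m - j))"
    by (simp add: smult_power of_nat_poly mult.commute)
  finally show ?thesis .
qed

lemma coeff_lin: "coeff ([:1, 1:] ^ n) i = real (n choose i)"
proof (cases "i \<le> n")
  case True then show ?thesis using coeff_linear_poly_power[of i n "1::real" 1] by simp
next
  case False
  have "degree ([:1::real, 1:] ^ n) \<le> n"
    by (metis degree_linear_power order_refl)
  then show ?thesis using False by (simp add: coeff_eq_0)
qed

lemma key:
  fixes m k :: nat assumes "odd k"
  shows "(\<Sum>j\<le>m. real (m choose j) * (-1/2) ^ j * real ((m + j) choose k)) = 0"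
proof -
  define P where "P = (\<Sum>j\<le>m. smult (real (m choose j) * (-1/2) ^ j) ([:1, 1:] ^ (m + j)))"
  have cP: "coeff P k = (\<Sum>j\<le>m. real (m choose j) * (-1/2) ^ j * real ((m + j) choose k))"
    unfolding P_def by (simp add: coeff_sum coeff_lin)
  have "P = [:1, 1:] ^ m * (\<Sum>j\<le>m. of_nat (m choose j) * (smult (-1/2) [:1, 1:]) ^ j * 1 ^ (m - j))"
    unfolding P_def sum_distrib_left by (rule sum.cong) (simp_all add: smult_aux)
  also have "\<dots> = [:1, 1:] ^ m * (smult (-1/2) [:1, 1:] + 1) ^ m"
    by (simp add: binomial_ring)
  also have "\<dots> = ([:1, 1:] * (smult (-1/2) [:1, 1:] + 1)) ^ m"
    by (rule power_mult_distrib[symmetric])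
  also have "[:1, 1:] * (smult (-1/2) [:1, 1:] + 1) = [:1/2, 0, -1/2 :: real:]"
    by (simp add: one_pCons)
  finally have Pe: "P = [:1/2, 0, -1/2 :: real:] ^ m" .
  have "evenp [:1/2, 0, -1/2 :: real:]"
    unfolding evenp_def
  proof (intro allI impI)
    fix k :: nat assume "odd k"
    then obtain j where "k = Suc (2*j)" by (metis oddE Suc_eq_plus1 add.commute)
    then show "coeff [:1/2, 0, -1/2 :: real:] k = 0"
      by (cases j) (auto simp: coeff_pCons split: nat.splits)
  qed
  hence "evenp P" unfolding Pe by (rule evenp_power)
  with assms cP show ?thesis unfolding evenp_def by auto
qed

theorem lemma4p10:
  fixes m n :: nat
  shows "(\<Sum>i\<in>{2 * int n - int m + 1 .. int m}.
            real (int_binom m i)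
            * (fact (nat (int m + i)) / fact (nat (int m + i - 2 * int n - 1)))
            * (-2::real) powi (- i)) = 0"
proof -
  define k where "k = 2 * n + 1"
  define F where "F j = real (m choose j) * (-1/2) ^ j * real ((m + j) choose k) * fact k" for j
  have "(\<Sum>i\<in>{2 * int n - int m + 1 .. int m}.
            real (int_binom m i)
            * (fact (nat (int m + i)) / fact (nat (int m + i - 2 * int n - 1)))
            * (-2::real) powi (- i)) = (\<Sum>i\<in>{0..int m}. F (nat i))"
  proof (rule sum.mono_neutral_cong)
    fix i assume i: "i \<in> {2 * int n - int m + 1..int m} - {0..int m}"
    then show "real (int_binom m i)
            * (fact (nat (int m + i)) / fact (nat (int m + i - 2 * int n - 1)))
            * (-2::real) powi (- i) = 0" by (auto simp: int_binom_def)
  next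
    fix i assume i: "i \<in> {0..int m} - {2 * int n - int m + 1..int m}"
    hence "m + nat i < k" unfolding k_def by auto
    then show "F (nat i) = 0" unfolding F_def by simp
  next
    fix i assume i: "i \<in> {2 * int n - int m + 1..int m} \<inter> {0..int m}"
    then obtain j where j0: "i = int j" by (metis IntD2 atLeastAtMost_iff nonneg_int_cases)
    have j: "i = int j" "j \<le> m" "k \<le> m + j" using i j0 unfolding k_def by auto
    have e: "nat (int m + i - 2 * int n - 1) = (m + j) - k" using j unfolding k_def by auto
    have f: "fact (m + j) / fact (m + j - k) = (fact k * real ((m + j) choose k) :: real)"
      using j(3) by (simp add: binomial_fact_lemma[symmetric] field_simps fact_binomial)
    have p: "(-2::real) powi (- i) = (-1/2) ^ j"
      using j by (simp add: power_int_minus power_inverse[symmetric])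
    show "real (int_binom m i)
            * (fact (nat (int m + i)) / fact (nat (int m + i - 2 * int n - 1)))
            * (-2::real) powi (- i) = F (nat i)"
      unfolding F_def int_binom_def e p using j f by (simp add: nat_add_distrib)
  qed auto
  also have "\<dots> = (\<Sum>j\<in>{0..m}. F j)"
  proof -
    have "{0..int m} = int ` {0..m}" by (simp add: image_int_atLeastAtMost)
    then show ?thesis by (simp add: sum.reindex)
  qed
  also have "\<dots> = fact k * (\<Sum>j\<le>m. real (m choose j) * (-1/2) ^ j * real ((m + j) choose k))"
    unfolding F_def by (simp add: sum_distrib_left atMost_atLeast0 mult_ac)
  also have "\<dots> = 0" using key[of k m] unfolding k_def by simp
  finally show ?thesis .
qed

end
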